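(* Let $(X,d)$ be a complete $\mathrm{CAT}(0)$-space, $\Omega\subset X$ a bounded set satisfying Condition (TB) with constant $\mathbf m$, and $\varepsilon:=(6\mathbf m)^{-1}$. Let $\xi:[0,\ell)\to X$ be a self-contracted curve with $\xi([0,\ell))\subset\Omega$. Fix $\tau\in[0,\ell)$ and let $\bar\gamma_\tau\in\Sigma_{\xi(\tau)}X$ satisfy $\angle_{\xi(\tau)}(\bar\gamma_\tau,\gamma_{\xi(\tau)\xi(t)})\le\arccos(3\varepsilon)$ for all $t\in(\tau,\ell)$ with $\xi(t)\ne\xi(\tau)$ (such $\bar\gamma_\tau$ exists). For $\sigma>0$ let $$\Omega_{\tau,\sigma}:=\{x\in X:\ 0<d(\xi(\tau),x)<\sigma,\ \angle_{\xi(\tau)}(\gamma_{\xi(\tau)x},\bar\gamma_\tau)\ge\pi-2\arcsin(\varepsilon/2)\},$$ and for $x\in\Omega_{\tau,\sigma}$ let $V_x:=\gamma_{x\xi(\tau)}\in\Sigma_xX$. Then for all $T\in(\tau,\ell)$, $x\in\Omega_{\tau,\sigma}$ and $\gamma\in\Sigma_xX$ with $\angle_x(V_x,\gamma)\le2\arcsin(\varepsilon/2)$, $$\big|\Pi_\gamma(\Xi(T))\big|\le\big|\Pi_\gamma(\Xi(\tau))\big|-\frac{\varepsilon}{2}\,d\big(\xi(\tau),\xi(T)\big).$$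
   Context: A geodesic metric space $(X,d)$ is a $\mathrm{CAT}(0)$-space if for all $x,y,z\in X$ and every minimal geodesic $\gamma$ from $y$ to $z$, $d^2(x,\gamma(s))\le(1-s)d^2(x,y)+sd^2(x,z)-(1-s)sd^2(y,z)$ for all $s\in[0,1]$; minimal geodesics are unique, denoted $\gamma_{xy}$. For geodesics $\gamma,\eta$ from $x$, $\angle_x(\gamma,\eta):=\lim_{s,t\to0}\tilde\angle[\gamma(s)x\eta(t)]$ with $\cos\tilde\angle[yxz]=\frac{d^2(x,y)+d^2(x,z)-d^2(y,z)}{2d(x,y)d(x,z)}$. The space of directions $\Sigma_xX$ is the completion, with respect to $\angle_x$, of $\{\gamma_{xy}:y\ne x\}$ modulo $\angle_x=0$. The tangent cone $C_xX$ is the Euclidean cone $(\Sigma_xX\times[0,\infty))/(\Sigma_xX\times\{0\})$ with origin $o_x$ and metric $d_x((\gamma,s),(\eta,t))=\sqrt{s^2+t^2-2st\cos\angle_x(\gamma,\eta)}$. Define $\log_x:X\to C_xX$, $\log_x(y)=(\gamma_{xy},d(x,y))$ ($\log_x(x)=o_x$); for $\gamma\in\Sigma_xX$, $P_\gamma:C_xX\to\mathbb{R}$, $P_\gamma((\eta,s))=s\cos\angle_x(\gamma,\eta)$, $P_\gamma(o_x)=0$; for $\Xi\subset X$, $\Pi_\gamma(\Xi)$ is the smallest closed interval containing $P_\gamma(\log_x(\Xi))$, and $|\cdot|$ is Lebesgue measure. Condition (TB) on $\Omega$ with constant $\mathbf m$: for every $x\in\Omega$, every subset $\Delta\subset\Sigma_xX$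 with $\angle_x(\gamma,\eta)\ge\pi/3$ for all distinct $\gamma,\eta\in\Delta$ has cardinality at most $\mathbf m$. A map $\xi:[0,\ell)\to X$ (not necessarily continuous) is self-contracted if $d(\xi(t_2),\xi(t_3))\le d(\xi(t_1),\xi(t_3))$ for all $0\le t_1\le t_2\le t_3<\ell$; $\Xi(t):=\xi([t,\ell))$. *)

theory Defs
  imports "HOL-Analysis.Analysis"
begin

(* The CAT(0) space X is the whole (nonempty) type 'a; completeness is the
   type class complete_space. *)

definition geodesic_path :: "(real \<Rightarrow> 'a::metric_space) \<Rightarrow> 'a \<Rightarrow> 'a \<Rightarrow> bool" where
  "geodesic_path g y z \<longleftrightarrow> g 0 = y \<and> g 1 = z \<and>
     (\<forall>s\<in>{0..1}. \<forall>t\<in>{0..1}. dist (g s) (g t) = \<bar>s - t\<bar> * dist y z)"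

definition CAT0 :: "'a::metric_space itself \<Rightarrow> bool" where
  "CAT0 _ \<longleftrightarrow> (\<forall>y z::'a. \<exists>g. geodesic_path g y z) \<and>
     (\<forall>x y z::'a. \<forall>g. geodesic_path g y z \<longrightarrow>
        (\<forall>s\<in>{0..1}. (dist x (g s))\<^sup>2 \<le> (1 - s) * (dist x y)\<^sup>2 + s * (dist x z)\<^sup>2
                                 - (1 - s) * s * (dist y z)\<^sup>2))"

(* the (unique, in a CAT(0) space) minimal geodesic gamma_{yz} *)
definition geod :: "'a::metric_space \<Rightarrow> 'a \<Rightarrow> real \<Rightarrow> 'a" where
  "geod y z = (SOME g. geodesic_path g y z)"

definition cmp_angle :: "'a::metric_space \<Rightarrow> 'a \<Rightarrow> 'a \<Rightarrow> real" where
  "cmp_angle x y z = arccos (((dist x y)\<^sup>2 + (dist x z)\<^sup>2 - (dist y z)\<^sup>2) / (2 * dist x y * dist x z))"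

definition ang :: "'a::metric_space \<Rightarrow> 'a \<Rightarrow> 'a \<Rightarrow> real" where
  "ang x y z = Lim (at_right 0 \<times>\<^sub>F at_right 0)
       (\<lambda>(s,t). cmp_angle x (geod x y s) (geod x z t))"

(* Space of directions Sigma_x X = completion of {gamma_{xy} : y \<noteq> x} w.r.t. the
   angle pseudometric, modulo angle 0.  An element is represented by a Cauchy
   sequence (w.r.t. the angle) of points y_n \<noteq> x; the direction gamma_{xy} is
   represented by the constant sequence (\<lambda>_. y).  All notions below depend only on
   the equivalence class. *)
definition dirs :: "'a::metric_space \<Rightarrow> (nat \<Rightarrow> 'a) set" where
  "dirs x = {u. (\<forall>n. u n \<noteq> x) \<and>
      (\<forall>e>0. \<exists>N. \<forall>m\<ge>N. \<forall>n\<ge>N. ang x (u m) (u n) < e)}"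

definition dang :: "'a::metric_space \<Rightarrow> (nat \<Rightarrow> 'a) \<Rightarrow> (nat \<Rightarrow> 'a) \<Rightarrow> real" where
  "dang x u v = lim (\<lambda>n. ang x (u n) (v n))"

definition dir :: "'a \<Rightarrow> nat \<Rightarrow> 'a" where
  "dir y = (\<lambda>_. y)"

definition Plog :: "'a::metric_space \<Rightarrow> (nat \<Rightarrow> 'a) \<Rightarrow> 'a \<Rightarrow> real" where
  "Plog x g y = (if y = x then 0 else dist x y * cos (dang x g (dir y)))"

definition PiInt :: "'a::metric_space \<Rightarrow> (nat \<Rightarrow> 'a) \<Rightarrow> 'a set \<Rightarrow> real set" where
  "PiInt x g S = \<Inter>{{a..b} | a b. Plog x g ` S \<subseteq> {a..b}}"

definition TB :: "'a::metric_space set \<Rightarrow> nat \<Rightarrow> bool" where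
  "TB \<Omega> m \<longleftrightarrow> (\<forall>x\<in>\<Omega>. \<forall>\<Delta>. \<Delta> \<subseteq> dirs x \<and>
      (\<forall>g\<in>\<Delta>. \<forall>h\<in>\<Delta>. g \<noteq> h \<longrightarrow> dang x g h \<ge> pi / 3)
      \<longrightarrow> finite \<Delta> \<and> card \<Delta> \<le> m)"

definition self_contracted :: "(real \<Rightarrow> 'a::metric_space) \<Rightarrow> real \<Rightarrow> bool" where
  "self_contracted \<xi> l \<longleftrightarrow> (\<forall>t1 t2 t3. 0 \<le> t1 \<and> t1 \<le> t2 \<and> t2 \<le> t3 \<and> t3 < l \<longrightarrow>
       dist (\<xi> t2) (\<xi> t3) \<le> dist (\<xi> t1) (\<xi> t3))"

definition Xi :: "(real \<Rightarrow> 'a) \<Rightarrow> real \<Rightarrow> real \<Rightarrow> 'a set" where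
  "Xi \<xi> l t = \<xi> ` {t..<l}"

definition Omega_ts :: "'a::metric_space \<Rightarrow> (nat \<Rightarrow> 'a) \<Rightarrow> real \<Rightarrow> real \<Rightarrow> 'a set" where
  "Omega_ts p gb \<epsilon> \<sigma> = {x. 0 < dist p x \<and> dist p x < \<sigma> \<and>
       dang p (dir x) gb \<ge> pi - 2 * arcsin (\<epsilon> / 2)}"

end

theory Submission
  imports Defs
begin


lemma geod_path: assumes "CAT0 TYPE('a::metric_space)" shows "geodesic_path (geod (y::'a) z) y z"
proof -
  have "\<exists>g. geodesic_path g y z" using assms unfolding CAT0_def by blast
  then show ?thesis unfolding geod_def by (rule someI_ex)
qed

lemma gp_D: assumes "geodesic_path g y z"
  shows "g 0 = y" "g 1 = z" "\<And>s t. s \<in> {0..1} \<Longrightarrow> t \<in> {0..1} \<Longrightarrow> dist (g s) (g t) = \<bar>s - t\<bar> * dist y z"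
  using assms unfolding geodesic_path_def by blast+
lemma gp_dist0: assumes "geodesic_path g y z" "s \<in> {0..1}" shows "dist y (g s) = s * dist y z"
proof -
  have "dist (g 0) (g s) = \<bar>0 - s\<bar> * dist y z" using gp_D(3)[OF assms(1), of 0 s] assms(2) by simp
  then show ?thesis using gp_D(1)[OF assms(1)] assms(2) by simp
qed

lemma gp_resc: assumes "geodesic_path g y z" "s' \<in> {0..1}"
  shows "geodesic_path (\<lambda>u. g (u * s')) y (g s')"
  unfolding geodesic_path_def
proof (intro conjI ballI)
  show "g (0 * s') = y" using gp_D(1)[OF assms(1)] by simp
  show "g (1 * s') = g s'" by simp
  fix s t :: real assume st: "s \<in> {0..1}" "t \<in> {0..1}"
  have "s * s' \<in> {0..1}" "t * s' \<in> {0..1}" using st assms(2) by (auto simp: mult_le_one)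
  then have "dist (g (s * s')) (g (t * s')) = \<bar>s * s' - t * s'\<bar> * dist y z" using gp_D(3)[OF assms(1)] by blast
  also have "\<dots> = \<bar>s - t\<bar> * (s' * dist y z)" using assms(2) by (simp add: abs_mult left_diff_distrib[symmetric])
  also have "s' * dist y z = dist y (g s')" using gp_dist0[OF assms] by simp
  finally show "dist (g (s * s')) (g (t * s')) = \<bar>s - t\<bar> * dist y (g s')" .
qed

lemma cat0_ineq: assumes "CAT0 TYPE('a::metric_space)" "geodesic_path g (y::'a) z" "s \<in> {0..1}"
  shows "(dist x (g s))\<^sup>2 \<le> (1 - s) * (dist x y)\<^sup>2 + s * (dist x z)\<^sup>2 - (1 - s) * s * (dist y z)\<^sup>2"
  using assms unfolding CAT0_def by blast

definition cq :: "real \<Rightarrow> real \<Rightarrow> real \<Rightarrow> real" where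
  "cq a b e = (a\<^sup>2 + b\<^sup>2 - e\<^sup>2) / (2 * a * b)"

lemma cq_bounds: assumes "a > 0" "b > 0" "\<bar>a - b\<bar> \<le> e" "e \<le> a + b" "e \<ge> 0"
  shows "-1 \<le> cq a b e" "cq a b e \<le> 1"
proof -
  have p: "2*a*b > 0" using assms by simp
  have "e\<^sup>2 \<le> (a+b)\<^sup>2" using assms by (intro power_mono) auto
  then have "-(2*a*b) \<le> a\<^sup>2 + b\<^sup>2 - e\<^sup>2" by (simp add: power2_eq_square algebra_simps)
  then show "-1 \<le> cq a b e" unfolding cq_def using p by (simp add: field_simps)
  have "(a-b)\<^sup>2 \<le> e\<^sup>2" using assms by (metis abs_le_square_iff abs_of_nonneg)
  then have "a\<^sup>2 + b\<^sup>2 - e\<^sup>2 \<le> 2*a*b" by (simp add: power2_eq_square algebra_simps)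
  then show "cq a b e \<le> 1" unfolding cq_def using p by (simp add: field_simps)
qed

lemma cmp_cq: "cmp_angle x y z = arccos (cq (dist x y) (dist x z) (dist y z))"
  unfolding cmp_angle_def cq_def by simp

lemma cq_metric: fixes x y z :: "'a::metric_space" assumes "y \<noteq> x" "z \<noteq> x"
  shows "-1 \<le> cq (dist x y) (dist x z) (dist y z)" "cq (dist x y) (dist x z) (dist y z) \<le> 1"
proof -
  have "\<bar>dist x y - dist x z\<bar> \<le> dist y z"
    by (metis abs_le_iff dist_commute dist_triangle2 dist_triangle3 diff_le_eq minus_diff_eq)
  moreover have "dist y z \<le> dist x y + dist x z" by (metis dist_commute dist_triangle)
  ultimately show "-1 \<le> cq (dist x y) (dist x z) (dist y z)" "cq (dist x y) (dist x z) (dist y z) \<le> 1"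
    using cq_bounds[of "dist x y" "dist x z" "dist y z"] assms by auto
qed

lemma cmp_bounds: fixes x y z :: "'a::metric_space" assumes "y \<noteq> x" "z \<noteq> x"
  shows "0 \<le> cmp_angle x y z" "cmp_angle x y z \<le> pi"
  using cq_metric[OF assms] unfolding cmp_cq by (auto intro: arccos_lbound arccos_ubound)

lemma cmp_sym: "cmp_angle x y z = cmp_angle x z y"
  unfolding cmp_angle_def by (simp add: dist_commute add.commute mult.commute mult.left_commute)

lemma cmp_mono: assumes cat: "CAT0 TYPE('a::metric_space)" and g: "geodesic_path g (x::'a) q"
  and qx: "q \<noteq> x" and wx: "w \<noteq> x" and s: "0 < \<sigma>" "\<sigma> \<le> 1"
  shows "cmp_angle x (g \<sigma>) w \<le> cmp_angle x q w"
proof -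
  define A where "A = dist x q"
  define c where "c = dist x w"
  define e where "e = dist q w"
  define m where "m = dist (g \<sigma>) w"
  have A: "A > 0" using qx by (simp add: A_def)
  have c: "c > 0" using wx by (simp add: c_def)
  have d1: "dist x (g \<sigma>) = \<sigma> * A" using gp_dist0[OF g, of \<sigma>] s by (simp add: A_def)
  have gx: "g \<sigma> \<noteq> x" using d1 A s by (metis dist_self mult_pos_pos zero_less_dist_iff)
  have ci: "m\<^sup>2 \<le> (1 - \<sigma>) * c\<^sup>2 + \<sigma> * e\<^sup>2 - (1 - \<sigma>) * \<sigma> * A\<^sup>2"
    using cat0_ineq[OF cat g, of \<sigma> w] s unfolding m_def c_def e_def A_def by (simp add: dist_commute)
  have "cq A c e \<le> cq (\<sigma>*A) c m"
  proof -
    have "\<sigma> * (A\<^sup>2 + c\<^sup>2 - e\<^sup>2) \<le> (\<sigma>*A)\<^sup>2 + c\<^sup>2 - m\<^sup>2"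
      using ci by (simp add: power2_eq_square algebra_simps)
    then have "\<sigma> * (A\<^sup>2 + c\<^sup>2 - e\<^sup>2) / (2*(\<sigma>*A)*c) \<le> ((\<sigma>*A)\<^sup>2 + c\<^sup>2 - m\<^sup>2) / (2*(\<sigma>*A)*c)"
      using A c s by (intro divide_right_mono) auto
    moreover have "\<sigma> * (A\<^sup>2 + c\<^sup>2 - e\<^sup>2) / (2*(\<sigma>*A)*c) = cq A c e"
      unfolding cq_def using A c s by (simp add: field_simps)
    ultimately show ?thesis unfolding cq_def by simp
  qed
  moreover have "-1 \<le> cq A c e" "cq (\<sigma>*A) c m \<le> 1"
    using cq_metric[OF qx wx] cq_metric[OF gx wx] d1 unfolding A_def c_def e_def m_def
    by (auto simp: dist_commute)
  ultimately have "arccos (cq (\<sigma>*A) c m) \<le> arccos (cq A c e)"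
    by (intro arccos_le_arccos) auto
  then show ?thesis unfolding cmp_cq using d1 by (simp add: A_def c_def e_def m_def dist_commute)
qed



definition Fa :: "'a::metric_space \<Rightarrow> 'a \<Rightarrow> 'a \<Rightarrow> real \<Rightarrow> real \<Rightarrow> real" where
  "Fa x y z s t = cmp_angle x (geod x y s) (geod x z t)"

lemma geod_dist: assumes "CAT0 TYPE('a::metric_space)" "s \<in> {0..1}"
  shows "dist x (geod (x::'a) y s) = s * dist x y"
  using gp_dist0[OF geod_path[OF assms(1)] assms(2)] .

lemma geod_ne: assumes "CAT0 TYPE('a::metric_space)" "0 < s" "s \<le> 1" "y \<noteq> x"
  shows "geod (x::'a) y s \<noteq> x"
proof -
  have "dist x (geod x y s) > 0" using geod_dist[OF assms(1), of s x y] assms by simp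
  then show ?thesis by auto
qed

lemma geod_1: assumes "CAT0 TYPE('a::metric_space)" shows "geod (x::'a) y 1 = y"
  using gp_D(2)[OF geod_path[OF assms]] .

lemma Fa_mono1: assumes cat: "CAT0 TYPE('a::metric_space)" and yx: "y \<noteq> (x::'a)" and zx: "z \<noteq> x"
  and s: "0 < s" "s \<le> s'" "s' \<le> 1" and t: "0 < t" "t \<le> 1"
  shows "Fa x y z s t \<le> Fa x y z s' t"
proof -
  have s'01: "s' \<in> {0..1}" using s by auto
  have g: "geodesic_path (\<lambda>u. geod x y (u * s')) x (geod x y s')"
    using gp_resc[OF geod_path[OF cat] s'01] .
  have q: "geod x y s' \<noteq> x" using geod_ne[OF cat _ _ yx, of s'] s by auto
  have w: "geod x z t \<noteq> x" using geod_ne[OF cat _ _ zx, of t] t by auto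
  have "cmp_angle x ((\<lambda>u. geod x y (u * s')) (s/s')) (geod x z t) \<le> cmp_angle x (geod x y s') (geod x z t)"
    using s by (intro cmp_mono[OF cat g q w]) auto
  moreover have "s / s' * s' = s" using s by auto
  ultimately show ?thesis unfolding Fa_def by simp
qed

lemma Fa_mono2: assumes cat: "CAT0 TYPE('a::metric_space)" and yx: "y \<noteq> (x::'a)" and zx: "z \<noteq> x"
  and s: "0 < s" "s \<le> 1" and t: "0 < t" "t \<le> t'" "t' \<le> 1"
  shows "Fa x y z s t \<le> Fa x y z s t'"
  using Fa_mono1[OF cat zx yx t s] unfolding Fa_def by (simp add: cmp_sym)

lemma Fa_bounds: assumes cat: "CAT0 TYPE('a::metric_space)" and yx: "y \<noteq> (x::'a)" and zx: "z \<noteq> x"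
  and s: "0 < s" "s \<le> 1" and t: "0 < t" "t \<le> 1"
  shows "0 \<le> Fa x y z s t" "Fa x y z s t \<le> pi"
  using cmp_bounds[OF geod_ne[OF cat s yx] geod_ne[OF cat t zx]] unfolding Fa_def by auto


definition FS where "FS x y z = (\<lambda>(s,t). Fa x y z s t) ` ({0<..1} \<times> {0<..1})"

lemma FS_mem: "v \<in> FS x y z \<longleftrightarrow> (\<exists>s t. s \<in> {0<..1} \<and> t \<in> {0<..1} \<and> v = Fa x y z s t)"
  unfolding FS_def image_iff by fastforce

lemma FS_ne: "FS x y z \<noteq> {}"
proof -
  have "Fa x y z 1 1 \<in> FS x y z" unfolding FS_mem by (rule exI[of _ 1], rule exI[of _ 1]) simp
  then show ?thesis by blast
qed

lemma FS_bdd: assumes cat: "CAT0 TYPE('a::metric_space)" and yx: "y \<noteq> (x::'a)" and zx: "z \<noteq> x"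
  shows "bdd_below (FS x y z)"
  unfolding bdd_below_def
proof (intro exI ballI)
  fix v assume "v \<in> FS x y z"
  then obtain s t where "s \<in> {0<..1}" "t \<in> {0<..1}" "v = Fa x y z s t" unfolding FS_mem by blast
  then show "0 \<le> v" using Fa_bounds(1)[OF cat yx zx, of s t] by simp
qed
lemma ang_inf: assumes cat: "CAT0 TYPE('a::metric_space)" and yx: "y \<noteq> (x::'a)" and zx: "z \<noteq> x"
  shows "ang x y z = Inf (FS x y z)"
proof -
  let ?S = "FS x y z"
  have ne: "?S \<noteq> {}" by (rule FS_ne)
  have bdd: "bdd_below ?S" by (rule FS_bdd[OF cat yx zx])
  have lim: "((\<lambda>(s,t). cmp_angle x (geod x y s) (geod x z t)) \<longlongrightarrow> Inf ?S) (at_right 0 \<times>\<^sub>F at_right 0)"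
  proof (rule order_tendstoI)
    fix a assume "a < Inf ?S"
    have H: "\<forall>s t. s \<in> {0<..1} \<longrightarrow> t \<in> {0<..1} \<longrightarrow> a < Fa x y z s t"
    proof (intro allI impI)
      fix s t :: real assume "s \<in> {0<..1}" "t \<in> {0<..1}"
      then have "Inf ?S \<le> Fa x y z s t" using bdd by (intro cInf_lower) (auto simp: FS_mem)
      then show "a < Fa x y z s t" using \<open>a < Inf ?S\<close> by simp
    qed
    moreover have "eventually (\<lambda>s. s \<in> {0<..<1}) (at_right (0::real))" by (rule eventually_at_right_real) simp
    ultimately show "eventually (\<lambda>p. a < (\<lambda>(s,t). cmp_angle x (geod x y s) (geod x z t)) p) (at_right 0 \<times>\<^sub>F at_right 0)"
      unfolding eventually_prod_filter
    proof (intro exI conjI allI impI)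
      show "eventually (\<lambda>s. s \<in> {0<..<1}) (at_right (0::real))" by fact
      show "eventually (\<lambda>s. s \<in> {0<..<1}) (at_right (0::real))" by fact
      fix s t :: real assume "s \<in> {0<..<1}" "t \<in> {0<..<1}"
      then show "a < (\<lambda>(s,t). cmp_angle x (geod x y s) (geod x z t)) (s, t)"
        using H unfolding Fa_def by simp
    qed
  next
    fix a assume "Inf ?S < a"
    then obtain v where "v \<in> ?S" "v < a" using cInf_lessD[OF ne] by blast
    then obtain s0 t0 where st0: "s0 \<in> {0<..1}" "t0 \<in> {0<..1}" "Fa x y z s0 t0 < a" unfolding FS_mem by auto
    have "eventually (\<lambda>s. s \<in> {0<..<s0}) (at_right (0::real))" using st0 by (intro eventually_at_right_real) simp
    moreover have "eventually (\<lambda>s. s \<in> {0<..<t0}) (at_right (0::real))" using st0 by (intro eventually_at_right_real) simp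
    moreover have H: "\<forall>s t. s \<in> {0<..<s0} \<longrightarrow> t \<in> {0<..<t0} \<longrightarrow> Fa x y z s t < a"
    proof (intro allI impI)
      fix s t :: real assume st: "s \<in> {0<..<s0}" "t \<in> {0<..<t0}"
      have "Fa x y z s t \<le> Fa x y z s0 t" using st st0 by (intro Fa_mono1[OF cat yx zx]) auto
      also have "\<dots> \<le> Fa x y z s0 t0" using st st0 by (intro Fa_mono2[OF cat yx zx]) auto
      finally show "Fa x y z s t < a" using st0 by simp
    qed
    ultimately show "eventually (\<lambda>p. (\<lambda>(s,t). cmp_angle x (geod x y s) (geod x z t)) p < a) (at_right 0 \<times>\<^sub>F at_right 0)"
      unfolding eventually_prod_filter
    proof (intro exI conjI allI impI)
      show "eventually (\<lambda>s. s \<in> {0<..<s0}) (at_right (0::real))" by fact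
      show "eventually (\<lambda>s. s \<in> {0<..<t0}) (at_right (0::real))" by fact
      fix s t :: real assume "s \<in> {0<..<s0}" "t \<in> {0<..<t0}"
      then show "(\<lambda>(s,t). cmp_angle x (geod x y s) (geod x z t)) (s, t) < a"
        using H unfolding Fa_def by simp
    qed
  qed
  have nt: "\<not> trivial_limit (at_right (0::real) \<times>\<^sub>F at_right (0::real))"
    using trivial_limit_at_right_real[of 0] by (simp add: prod_filter_eq_bot)
  show ?thesis unfolding ang_def using tendsto_Lim[OF nt lim] .
qed

lemma ang_le_Fa: assumes cat: "CAT0 TYPE('a::metric_space)" and yx: "y \<noteq> (x::'a)" and zx: "z \<noteq> x"
  and "s \<in> {0<..1}" "t \<in> {0<..1}" shows "ang x y z \<le> Fa x y z s t"
proof -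
  have bdd: "bdd_below (FS x y z)" by (rule FS_bdd[OF cat yx zx])
  show ?thesis unfolding ang_inf[OF cat yx zx] using assms(4,5) bdd by (intro cInf_lower) (auto simp: FS_mem)
qed

lemma ang_approx: assumes cat: "CAT0 TYPE('a::metric_space)" and yx: "y \<noteq> (x::'a)" and zx: "z \<noteq> x"
  and "e > 0" shows "\<exists>s t. s \<in> {0<..1} \<and> t \<in> {0<..1} \<and> Fa x y z s t < ang x y z + e"
proof -
  have ne: "FS x y z \<noteq> {}" by (rule FS_ne)
  have "Inf (FS x y z) < ang x y z + e" using ang_inf[OF cat yx zx] assms(4) by simp
  then obtain v where "v \<in> FS x y z" "v < ang x y z + e" using cInf_lessD[OF ne] by blast
  then show ?thesis unfolding FS_mem by blast
qed

lemma ang_bounds: assumes cat: "CAT0 TYPE('a::metric_space)" and yx: "y \<noteq> (x::'a)" and zx: "z \<noteq> x"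
  shows "0 \<le> ang x y z" "ang x y z \<le> pi"
proof -
  have ne: "FS x y z \<noteq> {}" by (rule FS_ne)
  show "0 \<le> ang x y z" unfolding ang_inf[OF cat yx zx] using ne Fa_bounds(1)[OF cat yx zx]
    by (intro cInf_greatest) (auto simp: FS_mem)
  show "ang x y z \<le> pi" using ang_le_Fa[OF cat yx zx, of 1 1] Fa_bounds(2)[OF cat yx zx, of 1 1] by simp
qed

lemma ang_le_cmp: assumes cat: "CAT0 TYPE('a::metric_space)" and yx: "y \<noteq> (x::'a)" and zx: "z \<noteq> x"
  shows "ang x y z \<le> cmp_angle x y z"
  using ang_le_Fa[OF cat yx zx, of 1 1] unfolding Fa_def geod_1[OF cat] by simp

lemma ang_sym: assumes cat: "CAT0 TYPE('a::metric_space)" and yx: "y \<noteq> (x::'a)" and zx: "z \<noteq> x"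
  shows "ang x y z = ang x z y"
proof -
  have "FS x y z = FS x z y" unfolding set_eq_iff FS_mem Fa_def
    by (metis cmp_sym)
  then show ?thesis using ang_inf[OF cat yx zx] ang_inf[OF cat zx yx] by simp
qed

lemma ang_self: assumes cat: "CAT0 TYPE('a::metric_space)" and yx: "y \<noteq> (x::'a)"
  shows "ang x y y = 0"
proof -
  have d: "dist x y \<noteq> 0" using yx by simp
  have "((dist x y)\<^sup>2 + (dist x y)\<^sup>2 - (dist y y)\<^sup>2) / (2 * dist x y * dist x y) = 1"
    using d by (simp add: power2_eq_square)
  then have "cmp_angle x y y = 0" unfolding cmp_angle_def by simp
  then show ?thesis using ang_le_cmp[OF cat yx yx] ang_bounds(1)[OF cat yx yx] by simp
qed



lemma ring2: "((p::real)*cu - q*cv)^2 + (p* sx - q* sy)^2 = p^2*(cu^2+sx^2) + q^2*(cv^2+sy^2) - 2*p*q*(cu*cv+sx* sy)"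
  by (simp add: power2_eq_square algebra_simps)
lemma pyth2: "((p::real)*cos u - q*cos v)^2 + (p* sin u - q* sin v)^2 = p^2 + q^2 - 2*p*q*cos (v - u)"
  unfolding ring2 cos_diff by (simp add: algebra_simps)

definition E :: "real \<Rightarrow> real \<Rightarrow> real \<Rightarrow> real" where
  "E a b g = sqrt (a\<^sup>2 + b\<^sup>2 - 2 * a * b * cos g)"

lemma sq_id1: "(a - r * cos u)\<^sup>2 + (r * sin u)\<^sup>2 = a\<^sup>2 + r\<^sup>2 - 2 * a * r * cos (u::real)"
  using pyth2[of a 0 r u] by simp

lemma eucl: fixes a c b1 b2 :: real
  assumes a: "a > 0" and c: "c > 0" and b1: "b1 \<ge> 0" and b2: "b2 \<ge> 0" and bp: "b1 + b2 < pi"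
  shows "\<exists>r. 0 < r \<and> r \<le> max a c \<and> E a r b1 + E r c b2 = E a c (b1 + b2)"
proof (cases "b1 = 0 \<and> b2 = 0")
  case True
  have "E a a 0 = 0" unfolding E_def by (simp add: power2_eq_square)
  then show ?thesis using True a by (intro exI[of _ a]) auto
next
  case False
  define b where "b = b1 + b2"
  have s1: "sin b1 \<ge> 0" using b1 bp b2 by (intro sin_ge_zero) auto
  have s2: "sin b2 \<ge> 0" using b1 bp b2 by (intro sin_ge_zero) auto
  have spos: "sin b1 > 0 \<or> sin b2 > 0"
  proof -
    have "b1 > 0 \<or> b2 > 0" using False b1 b2 by auto
    then show ?thesis using b1 b2 bp by (auto intro!: sin_gt_zero)
  qed
  define D where "D = a * sin b1 + c * sin b2"
  have D: "D > 0" unfolding D_def using spos s1 s2 a c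
    by (metis add_nonneg_pos add_pos_nonneg mult_nonneg_nonneg mult_pos_pos less_imp_le)
  have sb: "sin b > 0" unfolding b_def using False b1 b2 bp by (intro sin_gt_zero) auto
  define l where "l = a * sin b1 / D"
  define r where "r = a * c * sin b / D"
  have l01: "0 \<le> l" "l \<le> 1" unfolding l_def D_def using D s1 s2 a c
    by (auto simp: D_def divide_le_eq_1 intro!: divide_nonneg_pos)
  have rpos: "r > 0" unfolding r_def using a c sb D by simp
  define Zx where "Zx = (1 - l) * a + l * (c * cos b)"
  define Zy where "Zy = l * (c * sin b)"
  have hy: "Zy = r * sin b1" unfolding Zy_def r_def l_def using D by (simp add: field_simps)
  have key: "sin b2 + sin b1 * cos b = sin b * cos b1"
  proof -
    have "sin b2 + sin b1 * cos b = sin b2 + sin b1 * (cos b1 * cos b2 - sin b1 * sin b2)"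
      unfolding b_def cos_add by simp
    also have "\<dots> = sin b2 * (1 - (sin b1)\<^sup>2) + sin b1 * cos b1 * cos b2"
      by (simp add: power2_eq_square algebra_simps)
    also have "1 - (sin b1)\<^sup>2 = (cos b1)\<^sup>2" by (simp add: cos_squared_eq)
    finally show ?thesis unfolding b_def sin_add by (simp add: power2_eq_square algebra_simps)
  qed
  have hx: "Zx = r * cos b1"
  proof -
    have oml: "1 - l = c * sin b2 / D" unfolding l_def using D by (simp add: D_def field_simps)
    have "Zx = (c * sin b2 / D) * a + (a * sin b1 / D) * (c * cos b)"
      unfolding Zx_def oml by (simp add: l_def)
    also have "\<dots> = (a * c * sin b2 + a * sin b1 * c * cos b) / D"
      using D by (simp add: field_simps)
    finally have "Zx = (a * c * sin b2 + a * sin b1 * c * cos b) / D" .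
    also have "a * c * sin b2 + a * sin b1 * c * cos b = a * c * (sin b2 + sin b1 * cos b)"
      by (simp add: algebra_simps)
    also have "\<dots> = a * c * sin b * cos b1" using key by simp
    finally show ?thesis unfolding r_def by simp
  qed
  have X: "(a - c * cos b)\<^sup>2 + (c * sin b)\<^sup>2 = a\<^sup>2 + c\<^sup>2 - 2 * a * c * cos b" by (rule sq_id1)
  have e1: "E a r b1 = l * E a c b"
  proof -
    have "a\<^sup>2 + r\<^sup>2 - 2 * a * r * cos b1 = (a - Zx)\<^sup>2 + Zy\<^sup>2"
      using sq_id1[of a r b1] hx hy by simp
    also have "\<dots> = l\<^sup>2 * ((a - c * cos b)\<^sup>2 + (c * sin b)\<^sup>2)"
      unfolding Zx_def Zy_def by (simp add: power2_eq_square algebra_simps)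
    finally have "E a r b1 = sqrt (l\<^sup>2 * (a\<^sup>2 + c\<^sup>2 - 2 * a * c * cos b))" unfolding E_def X by simp
    then show ?thesis unfolding E_def using l01 by (simp add: real_sqrt_mult)
  qed
  have e2: "E r c b2 = (1 - l) * E a c b"
  proof -
    have cb2: "cos b2 = cos b * cos b1 + sin b * sin b1" unfolding b_def
      by (metis add_diff_cancel_left' cos_diff)
    have "r\<^sup>2 + c\<^sup>2 - 2 * r * c * cos b2 = (r * cos b1 - c * cos b)\<^sup>2 + (r * sin b1 - c * sin b)\<^sup>2"
      using pyth2[of r b1 c b] by (simp add: b_def)
    also have "\<dots> = (Zx - c * cos b)\<^sup>2 + (Zy - c * sin b)\<^sup>2" using hx hy by simp
    also have "\<dots> = (1 - l)\<^sup>2 * ((a - c * cos b)\<^sup>2 + (c * sin b)\<^sup>2)"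
      unfolding Zx_def Zy_def by (simp add: power2_eq_square algebra_simps)
    finally have "E r c b2 = sqrt ((1 - l)\<^sup>2 * (a\<^sup>2 + c\<^sup>2 - 2 * a * c * cos b))" unfolding E_def X by simp
    then show ?thesis unfolding E_def using l01 by (simp add: real_sqrt_mult)
  qed
  have rle: "r \<le> max a c"
  proof -
    have "r\<^sup>2 = Zx\<^sup>2 + Zy\<^sup>2" using pyth2[of 0 0 "-r" b1] unfolding hx hy by simp
    also have "\<dots> = ((1-l)*a)\<^sup>2 + 2 * ((1-l)*a) * (l * c) * cos b + (l*c)\<^sup>2"
      unfolding Zx_def Zy_def using pyth2[of "(1-l)*a" 0 "-(l*c)" b] by (simp add: algebra_simps)
    also have "\<dots> \<le> ((1-l)*a)\<^sup>2 + 2 * ((1-l)*a) * (l * c) * 1 + (l*c)\<^sup>2"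
    proof -
      have nn: "0 \<le> 2 * ((1-l)*a) * (l * c)" using l01 a c by simp
      show ?thesis using mult_left_mono[OF cos_le_one[of b] nn] by simp
    qed
    also have "\<dots> = ((1-l)*a + l*c)\<^sup>2" by (simp add: power2_eq_square algebra_simps)
    finally have "r\<^sup>2 \<le> ((1-l)*a + l*c)\<^sup>2" .
    then have "r \<le> (1-l)*a + l*c"
      by (rule power2_le_imp_le) (use l01 a c in simp)
    also have "\<dots> \<le> (1-l) * max a c + l * max a c"
      using l01 by (intro add_mono mult_left_mono) auto
    finally show ?thesis by (simp add: algebra_simps)
  qed
  show ?thesis using rpos rle e1 e2 unfolding b_def by (intro exI[of _ r]) (auto simp: algebra_simps)
qed



lemma dist_E: fixes x Y Z :: "'a::metric_space" assumes "Y \<noteq> x" "Z \<noteq> x"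
  shows "dist Y Z = E (dist x Y) (dist x Z) (cmp_angle x Y Z)"
proof -
  have b: "-1 \<le> cq (dist x Y) (dist x Z) (dist Y Z)" "cq (dist x Y) (dist x Z) (dist Y Z) \<le> 1"
    using cq_metric[OF assms] by auto
  have p: "dist x Y > 0" "dist x Z > 0" using assms by auto
  have "cos (cmp_angle x Y Z) = cq (dist x Y) (dist x Z) (dist Y Z)" unfolding cmp_cq using b by simp
  then have "(dist x Y)\<^sup>2 + (dist x Z)\<^sup>2 - 2 * dist x Y * dist x Z * cos (cmp_angle x Y Z) = (dist Y Z)\<^sup>2"
    unfolding cq_def using p by (simp add: field_simps)
  then show ?thesis unfolding E_def by simp
qed

lemma E_strict: assumes "a > 0" "b > 0" "0 \<le> g1" "g1 < g2" "g2 \<le> pi"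
  shows "E a b g1 < E a b g2"
proof -
  have "cos g2 < cos g1" using assms by (subst cos_mono_less_eq) auto
  then have "2 * a * b * cos g2 < 2 * a * b * cos g1" using assms by simp
  then show ?thesis unfolding E_def by (intro real_sqrt_less_mono) simp
qed

lemma ang_tri: assumes cat: "CAT0 TYPE('a::metric_space)" and yx: "y \<noteq> (x::'a)" and zx: "z \<noteq> x" and wx: "w \<noteq> x"
  shows "ang x y w \<le> ang x y z + ang x z w"
proof (rule ccontr)
  assume "\<not> ?thesis"
  then have gt: "ang x y w > ang x y z + ang x z w" by simp
  define d where "d = (ang x y w - ang x y z - ang x z w) / 3"
  have d: "d > 0" using gt unfolding d_def by simp
  define b1 where "b1 = ang x y z + d"
  define b2 where "b2 = ang x z w + d"
  have b1: "b1 \<ge> 0" "b2 \<ge> 0" unfolding b1_def b2_def using ang_bounds(1)[OF cat yx zx] ang_bounds(1)[OF cat zx wx] d by auto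
  have bsum: "b1 + b2 = ang x y w - d" unfolding b1_def b2_def d_def by (simp add: field_simps)
  have bpi: "b1 + b2 < pi" using bsum ang_bounds(2)[OF cat yx wx] d by simp
  obtain s1 u1 where su1: "s1 \<in> {0<..1}" "u1 \<in> {0<..1}" "Fa x y z s1 u1 < b1"
    using ang_approx[OF cat yx zx d] unfolding b1_def by blast
  obtain u2 w2 where uw2: "u2 \<in> {0<..1}" "w2 \<in> {0<..1}" "Fa x z w u2 w2 < b2"
    using ang_approx[OF cat zx wx d] unfolding b2_def by blast
  define dy where "dy = dist x y"
  define dz where "dz = dist x z"
  define dw where "dw = dist x w"
  have dpos: "dy > 0" "dz > 0" "dw > 0" unfolding dy_def dz_def dw_def using yx zx wx by auto
  define L where "L = min (s1 * dy) (min (min u1 u2 * dz) (w2 * dw))"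
  have L: "L > 0" unfolding L_def using su1 uw2 dpos by auto
  obtain r where r: "0 < r" "r \<le> max L L" "E L r b1 + E r L b2 = E L L (b1 + b2)"
    using eucl[OF L L b1 bpi] by blast
  define t where "t = L / dy"
  define t' where "t' = r / dz"
  define t'' where "t'' = L / dw"
  have t: "0 < t" "t \<le> s1" unfolding t_def using L dpos by (auto simp: L_def field_simps)
  have rL: "r \<le> min u1 u2 * dz" using r unfolding L_def by simp
  have "min u1 u2 * dz \<le> u1 * dz" "min u1 u2 * dz \<le> u2 * dz" using dpos by (auto intro: mult_right_mono)
  then have ru: "r \<le> u1 * dz" "r \<le> u2 * dz" using rL by auto
  have t': "0 < t'" "t' \<le> u1" "t' \<le> u2" unfolding t'_def using r ru dpos
    by (auto simp: field_simps)
  have t'': "0 < t''" "t'' \<le> w2" unfolding t''_def using L dpos by (auto simp: L_def field_simps)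
  define Y where "Y = geod x y t"
  define Z where "Z = geod x z t'"
  define W where "W = geod x w t''"
  have t01: "0 < t" "t \<le> 1" "0 < t'" "t' \<le> 1" "0 < t''" "t'' \<le> 1" using t t' t'' su1 uw2 by auto
  have dY: "dist x Y = L" unfolding Y_def using geod_dist[OF cat, of t x y] t01 dpos
    by (simp add: t_def dy_def)
  have dZ: "dist x Z = r" unfolding Z_def using geod_dist[OF cat, of t' x z] t01 dpos
    by (simp add: t'_def dz_def)
  have dW: "dist x W = L" unfolding W_def using geod_dist[OF cat, of t'' x w] t01 dpos
    by (simp add: t''_def dw_def)
  have Yx: "Y \<noteq> x" "Z \<noteq> x" "W \<noteq> x" using dY dZ dW L r by auto
  have f1: "Fa x y z t t' < b1"
  proof -
    have "Fa x y z t t' \<le> Fa x y z s1 t'" using t t' su1 by (intro Fa_mono1[OF cat yx zx]) auto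
    also have "\<dots> \<le> Fa x y z s1 u1" using t t' su1 by (intro Fa_mono2[OF cat yx zx]) auto
    finally show ?thesis using su1 by simp
  qed
  have f2: "Fa x z w t' t'' < b2"
  proof -
    have "Fa x z w t' t'' \<le> Fa x z w u2 t''" using t'' t' uw2 by (intro Fa_mono1[OF cat zx wx]) auto
    also have "\<dots> \<le> Fa x z w u2 w2" using t'' t' uw2 by (intro Fa_mono2[OF cat zx wx]) auto
    finally show ?thesis using uw2 by simp
  qed
  have f3: "Fa x y w t t'' > b1 + b2"
  proof -
    have "ang x y w \<le> Fa x y w t t''" using t t'' su1 uw2 by (intro ang_le_Fa[OF cat yx wx]) auto
    then show ?thesis using bsum d by simp
  qed
  have "dist Y Z = E L r (Fa x y z t t')" using dist_E[OF Yx(1,2)] dY dZ unfolding Fa_def Y_def Z_def by simp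
  also have "\<dots> < E L r b1" using f1 L r bpi b1 Fa_bounds(1)[OF cat yx zx t01(1,2,3,4)]
    by (intro E_strict) auto
  finally have 1: "dist Y Z < E L r b1" .
  have "dist Z W = E r L (Fa x z w t' t'')" using dist_E[OF Yx(2,3)] dZ dW unfolding Fa_def Z_def W_def by simp
  also have "\<dots> < E r L b2" using f2 L r bpi b1 Fa_bounds(1)[OF cat zx wx t01(3,4,5,6)]
    by (intro E_strict) auto
  finally have 2: "dist Z W < E r L b2" .
  have "E L L (b1 + b2) < E L L (Fa x y w t t'')" using f3 L bpi b1 Fa_bounds(2)[OF cat yx wx t01(1,2,5,6)]
    by (intro E_strict) auto
  also have "\<dots> = dist Y W" using dist_E[OF Yx(1,3)] dY dW unfolding Fa_def Y_def W_def by simp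
  finally have 3: "E L L (b1 + b2) < dist Y W" .
  have "dist Y W \<le> dist Y Z + dist Z W" by (rule dist_triangle)
  then show False using 1 2 3 r(3) by simp
qed



lemma dirs_D: assumes "u \<in> dirs x"
  shows "\<And>n. u n \<noteq> x" "\<And>e. e > 0 \<Longrightarrow> \<exists>N. \<forall>m\<ge>N. \<forall>n\<ge>N. ang x (u m) (u n) < e"
  using assms unfolding dirs_def by auto

lemma dir_in: assumes cat: "CAT0 TYPE('a::metric_space)" and yx: "y \<noteq> (x::'a)"
  shows "dir y \<in> dirs x"
  unfolding dirs_def dir_def using ang_self[OF cat yx] yx by auto

lemma dang_dir: "dang x (dir y) (dir z) = ang x y z"
  unfolding dang_def dir_def by simp

lemma ang_conv: assumes cat: "CAT0 TYPE('a::metric_space)" and u: "u \<in> dirs (x::'a)" and v: "v \<in> dirs x"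
  shows "convergent (\<lambda>n. ang x (u n) (v n))"
  unfolding Cauchy_convergent_iff[symmetric]
proof (rule CauchyI)
  fix e :: real assume e: "0 < e"
  obtain N1 where N1: "\<forall>m\<ge>N1. \<forall>n\<ge>N1. ang x (u m) (u n) < e/2" using dirs_D(2)[OF u, of "e/2"] e by auto
  obtain N2 where N2: "\<forall>m\<ge>N2. \<forall>n\<ge>N2. ang x (v m) (v n) < e/2" using dirs_D(2)[OF v, of "e/2"] e by auto
  have un: "\<And>n. u n \<noteq> x" and vn: "\<And>n. v n \<noteq> x" using dirs_D(1) u v by auto
  have A: "ang x (u m) (v m) \<le> ang x (u m) (u n) + ang x (v m) (v n) + ang x (u n) (v n)" for m n
  proof -
    have "ang x (u m) (v m) \<le> ang x (u m) (u n) + ang x (u n) (v m)" by (rule ang_tri[OF cat un un vn])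
    also have "ang x (u n) (v m) \<le> ang x (u n) (v n) + ang x (v n) (v m)" by (rule ang_tri[OF cat un vn vn])
    also have "ang x (v n) (v m) = ang x (v m) (v n)" by (rule ang_sym[OF cat vn vn])
    finally show ?thesis by simp
  qed
  show "\<exists>M. \<forall>m\<ge>M. \<forall>n\<ge>M. norm (ang x (u m) (v m) - ang x (u n) (v n)) < e"
  proof (intro exI allI impI)
    fix m n assume "max N1 N2 \<le> m" "max N1 N2 \<le> n"
    then have "ang x (u m) (u n) < e/2" "ang x (v m) (v n) < e/2" "ang x (u n) (u m) < e/2" "ang x (v n) (v m) < e/2"
      using N1 N2 by auto
    then show "norm (ang x (u m) (v m) - ang x (u n) (v n)) < e" using A[of m n] A[of n m] by auto
  qed
qed

lemma dang_lim: assumes cat: "CAT0 TYPE('a::metric_space)" and u: "u \<in> dirs (x::'a)" and v: "v \<in> dirs x"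
  shows "(\<lambda>n. ang x (u n) (v n)) \<longlonglongrightarrow> dang x u v"
  using ang_conv[OF cat u v] unfolding dang_def convergent_LIMSEQ_iff .

lemma dang_tri: assumes cat: "CAT0 TYPE('a::metric_space)" and u: "u \<in> dirs (x::'a)" and v: "v \<in> dirs x" and w: "w \<in> dirs x"
  shows "dang x u w \<le> dang x u v + dang x v w"
proof (rule tendsto_le[OF _ tendsto_add[OF dang_lim[OF cat u v] dang_lim[OF cat v w]] dang_lim[OF cat u w]])
  show "sequentially \<noteq> bot" by simp
  have un: "\<And>n. u n \<noteq> x" and vn: "\<And>n. v n \<noteq> x" and wn: "\<And>n. w n \<noteq> x" using dirs_D(1) u v w by auto
  show "\<forall>\<^sub>F n in sequentially. ang x (u n) (w n) \<le> ang x (u n) (v n) + ang x (v n) (w n)"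
    using ang_tri[OF cat un vn wn] by simp
qed

lemma dang_sym: assumes cat: "CAT0 TYPE('a::metric_space)" and u: "u \<in> dirs (x::'a)" and v: "v \<in> dirs x"
  shows "dang x u v = dang x v u"
proof -
  have un: "\<And>n. u n \<noteq> x" and vn: "\<And>n. v n \<noteq> x" using dirs_D(1) u v by auto
  show ?thesis unfolding dang_def using ang_sym[OF cat un vn] by simp
qed

lemma dang_nonneg: assumes cat: "CAT0 TYPE('a::metric_space)" and u: "u \<in> dirs (x::'a)" and v: "v \<in> dirs x"
  shows "0 \<le> dang x u v"
proof (rule LIMSEQ_le_const[OF dang_lim[OF cat u v]])
  have un: "\<And>n. u n \<noteq> x" and vn: "\<And>n. v n \<noteq> x" using dirs_D(1) u v by auto
  show "\<exists>N. \<forall>n\<ge>N. 0 \<le> ang x (u n) (v n)" using ang_bounds(1)[OF cat un vn] by auto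
qed



lemma sqrt_one_minus: assumes "0 \<le> x" "x \<le> 1" shows "sqrt (1 - x) \<le> 1 - x/2"
proof -
  have "1 - x \<le> (1 - x/2)\<^sup>2" by (simp add: power2_eq_square algebra_simps)
  then have "sqrt (1 - x) \<le> sqrt ((1 - x/2)\<^sup>2)" by (rule real_sqrt_le_mono)
  then show ?thesis using assms by simp
qed

lemma poly_ineq: fixes q :: real assumes "0 \<le> q" "q \<le> 1/36"
  shows "0 \<le> 3*(1-q/2)^2 - (1-q/8)*(1-9*q/2)*(1-q/2) - (1-q/8) - 1"
proof -
  have "3*(1-q/2)^2 - (1-q/8)*(1-9*q/2)*(1-q/2) - (1-q/8) - 1 = q * (9/4 - 17/8 * q + 9/32 * q^2)"
    by (simp add: power2_eq_square field_simps)
  moreover have "0 \<le> 9/4 - 17/8 * q + 9/32 * q^2" using assms by (simp add: add_nonneg_nonneg)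
  ultimately show ?thesis using assms by simp
qed

definition dl :: "real \<Rightarrow> real" where "dl e = 2 * arcsin (e/2)"
definition AA :: "real \<Rightarrow> real" where "AA e = arccos (3 * e)"

lemma trig_facts: fixes e :: real assumes e: "0 < e" "e \<le> 1/6"
  shows "0 \<le> dl e" "dl e < pi/2" "0 \<le> AA e" "AA e < pi/2" "0 < cos (dl e + AA e)"
    "dl e + AA e < pi/2"
    "cos (dl e + AA e) * cos (dl e) - sin (dl e) \<ge> e"
proof -
  define u where "u = e/2"
  have u: "0 < u" "u \<le> 1/12" using e unfolding u_def by auto
  have asu: "sin (arcsin u) = u" "cos (arcsin u) = sqrt (1 - u\<^sup>2)" using u by (auto simp: cos_arcsin)
  define cu where "cu = sqrt (1 - u\<^sup>2)"
  have cos_d: "cos (dl e) = 1 - e\<^sup>2/2"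
    unfolding dl_def u_def[symmetric] cos_double_sin asu(1) by (simp add: power2_eq_square u_def)
  have sin_d: "sin (dl e) = e * cu"
    unfolding dl_def u_def[symmetric] sin_double asu cu_def using u_def by simp
  define s where "s = sqrt (1 - (3*e)\<^sup>2)"
  have e3: "-1 \<le> 3*e" "3*e \<le> 1" using e by auto
  have cos_A: "cos (AA e) = 3*e" unfolding AA_def using e3 by simp
  have sin_A: "sin (AA e) = s" unfolding AA_def s_def using e3 by (simp add: sin_arccos)
  have cu_b: "0 \<le> cu" "cu \<le> 1 - e\<^sup>2/8"
  proof -
    show "0 \<le> cu" unfolding cu_def using u by (simp add: power_le_one)
    have "cu \<le> 1 - u\<^sup>2/2" unfolding cu_def using u by (intro sqrt_one_minus) (auto simp: power_le_one)
    then show "cu \<le> 1 - e\<^sup>2/8" by (simp add: u_def power2_eq_square)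
  qed
  have s_b: "0 \<le> s" "s \<le> 1 - 9*e\<^sup>2/2"
  proof -
    have q: "0 \<le> (3*e)\<^sup>2" "(3*e)\<^sup>2 \<le> 1" using e3 e power_le_one[of "3*e" 2] by auto
    show "0 \<le> s" unfolding s_def using q by simp
    have "s \<le> 1 - (3*e)\<^sup>2/2" unfolding s_def using q by (intro sqrt_one_minus)
    then show "s \<le> 1 - 9*e\<^sup>2/2" by (simp add: power2_eq_square)
  qed
  have e2: "0 \<le> e\<^sup>2" "e\<^sup>2 \<le> 1/36"
  proof -
    show "0 \<le> e\<^sup>2" by simp
    have "e * e \<le> (1/6) * (1/6)" using e by (intro mult_mono) auto
    then show "e\<^sup>2 \<le> 1/36" by (simp add: power2_eq_square)
  qed
  define K where "K = cos (dl e + AA e)"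
  have K: "K = (1 - e\<^sup>2/2) * (3*e) - e * cu * s" unfolding K_def cos_add cos_d sin_d cos_A sin_A by simp
  have cus: "cu * s \<le> (1 - e\<^sup>2/8) * (1 - 9*e\<^sup>2/2)"
    using cu_b s_b by (intro mult_mono) auto
  have cus1: "cu * s \<le> 1"
  proof -
    have "(1 - e\<^sup>2/8) * (1 - 9*e\<^sup>2/2) \<le> 1 * 1" using e2 by (intro mult_mono) auto
    then show ?thesis using cus by simp
  qed
  have Kpos: "0 < K"
  proof -
    have h1: "e * cu * s \<le> e" using cus1 e by (simp add: mult_left_le mult.assoc)
    have h2: "2 * e < (1 - e\<^sup>2/2) * (3*e)" using e2 e by (simp add: algebra_simps)
    show ?thesis unfolding K using h1 h2 e by linarith
  qed
  then show "0 < cos (dl e + AA e)" unfolding K_def .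
  have main: "K * (1 - e\<^sup>2/2) - e * cu \<ge> e"
  proof -
    have P: "0 \<le> 3*(1-e\<^sup>2/2)^2 - (1-e\<^sup>2/8)*(1-9*e\<^sup>2/2)*(1-e\<^sup>2/2) - (1-e\<^sup>2/8) - 1"
      using poly_ineq[OF e2] .
    have h1: "cu * s * (1 - e\<^sup>2/2) \<le> (1-e\<^sup>2/8)*(1-9*e\<^sup>2/2)*(1-e\<^sup>2/2)"
      using cus e2 by (intro mult_right_mono) auto
    have "0 \<le> 3*(1-e\<^sup>2/2)^2 - cu * s * (1 - e\<^sup>2/2) - cu - 1"
      using P h1 cu_b by linarith
    then have "0 \<le> e * (3*(1-e\<^sup>2/2)^2 - cu * s * (1 - e\<^sup>2/2) - cu - 1)" using e by simp
    moreover have "K * (1 - e\<^sup>2/2) - e * cu - e = e * (3*(1-e\<^sup>2/2)^2 - cu * s * (1 - e\<^sup>2/2) - cu - 1)"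
      unfolding K by (simp add: power2_eq_square field_simps)
    ultimately show ?thesis by linarith
  qed
  then show "cos (dl e + AA e) * cos (dl e) - sin (dl e) \<ge> e" unfolding K_def cos_d sin_d by simp
  have dl0: "0 \<le> dl e" unfolding dl_def u_def[symmetric] using u arcsin_le_mono[of 0 u] by simp
  then show "0 \<le> dl e" .
  have dlpi: "dl e \<le> pi" unfolding dl_def using arcsin_ubound[of "e/2"] e by simp
  have "cos (pi/2) < cos (dl e)" unfolding cos_d using e2 by simp
  then show dlh: "dl e < pi/2" using dl0 dlpi by (subst (asm) cos_mono_less_eq) auto
  have A0: "0 \<le> AA e" "AA e \<le> pi" unfolding AA_def using e3 by (auto intro: arccos_lbound arccos_ubound)
  then show "0 \<le> AA e" by simp
  have "cos (pi/2) < cos (AA e)" unfolding cos_A using e by simp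
  then show "AA e < pi/2" using A0 by (subst (asm) cos_mono_less_eq) auto
  then have "dl e + AA e \<le> pi" using dlh by simp
  moreover have "cos (pi/2) < cos (dl e + AA e)" using Kpos unfolding K_def by simp
  ultimately show "dl e + AA e < pi/2" using A0 dl0 by (subst (asm) cos_mono_less_eq) auto
qed



lemma keyreal: fixes a b r e th ph :: real
  assumes a: "a > 0" and b: "b > 0" and r: "r > 0" and e: "0 < e" "e \<le> 1/6"
  and Cx: "-1 \<le> cq a b r" "cq a b r \<le> 1" and Cp: "-1 \<le> cq a r b" "cq a r b \<le> 1"
  and th: "0 \<le> th" "th \<le> dl e"
  and ph: "0 \<le> ph" "ph \<le> th + arccos (cq a b r)"
  and bp: "arccos (cq a r b) \<ge> pi - dl e - AA e"
  shows "b * cos ph \<ge> a * cos th + e * r"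
proof -
  note T = trig_facts[OF e]
  define K where "K = cos (dl e + AA e)"
  define X where "X = cq a b r"
  define P where "P = cq a r b"
  have "cos (arccos P) \<le> cos (pi - (dl e + AA e))"
    using bp T Cp unfolding P_def
    by (subst cos_mono_le_eq) (auto intro: arccos_lbound arccos_ubound)
  then have PK: "P \<le> - K" unfolding K_def using Cp P_def by simp
  have bX: "b * X = a - r * P" unfolding X_def P_def cq_def using a b r
    by (simp add: field_simps power2_eq_square)
  have lc: "b\<^sup>2 = a\<^sup>2 + r\<^sup>2 - 2 * a * r * P" unfolding P_def cq_def using a r
    by (simp add: field_simps)
  have "r * P \<le> r * (-K)" using PK r by (intro mult_left_mono) auto
  then have bXK: "b * X \<ge> a + r * K" using bX by simp
  have Kpos: "K > 0" unfolding K_def using T by simp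
  have Xpos: "X > 0"
  proof -
    have "r * K > 0" using r Kpos by simp
    then have "b * X > 0" using bXK a by linarith
    then show ?thesis using b by (simp add: zero_less_mult_iff)
  qed
  have bs: "b * sqrt (1 - X\<^sup>2) \<le> r"
  proof -
    have "b\<^sup>2 * (1 - X\<^sup>2) = r\<^sup>2 * (1 - P\<^sup>2)"
    proof -
      have "b\<^sup>2 * (1 - X\<^sup>2) = b\<^sup>2 - (b * X)\<^sup>2" by (simp add: power2_eq_square algebra_simps)
      also have "\<dots> = r\<^sup>2 * (1 - P\<^sup>2)" unfolding bX lc by (simp add: power2_eq_square algebra_simps)
      finally show ?thesis .
    qed
    moreover have "r\<^sup>2 * (1 - P\<^sup>2) \<le> r\<^sup>2 * 1" by (intro mult_left_mono) auto
    ultimately have "b\<^sup>2 * (1 - X\<^sup>2) \<le> r\<^sup>2" by simp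
    then have "sqrt (b\<^sup>2 * (1 - X\<^sup>2)) \<le> sqrt (r\<^sup>2)" by (rule real_sqrt_le_mono)
    then show ?thesis using b r by (simp add: real_sqrt_mult)
  qed
  define al where "al = arccos X"
  have al: "0 \<le> al" "al \<le> pi/2"
  proof -
    show "0 \<le> al" unfolding al_def X_def using Cx by (rule arccos_lbound)
    have "arccos X \<le> arccos 0" using Xpos Cx unfolding X_def by (intro arccos_le_arccos) auto
    then show "al \<le> pi/2" unfolding al_def by simp
  qed
  have cal: "cos al = X" "sin al = sqrt (1 - X\<^sup>2)" unfolding al_def X_def using Cx by (auto simp: sin_arccos)
  have thal: "th + al \<le> pi" using al th T by simp
  have "cos (th + al) \<le> cos ph" using ph thal th al unfolding al_def X_def
    by (subst cos_mono_le_eq) auto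
  also note cos_add
  finally have c1: "cos th * X - sin th * sqrt (1 - X\<^sup>2) \<le> cos ph" unfolding cal .
  have cth: "0 \<le> cos th" using th T by (intro cos_ge_zero) auto
  have sth: "0 \<le> sin th" using th T by (intro sin_ge_zero) auto
  have "b * cos ph \<ge> cos th * (b * X) - sin th * (b * sqrt (1 - X\<^sup>2))"
    using mult_left_mono[OF c1, of b] b by (simp add: algebra_simps)
  moreover have "cos th * (b * X) \<ge> cos th * (a + r * K)" using bXK cth by (rule mult_left_mono)
  moreover have "sin th * (b * sqrt (1 - X\<^sup>2)) \<le> sin th * r" using bs sth by (rule mult_left_mono)
  moreover have "K * cos th - sin th \<ge> e"
  proof -
    have "cos (dl e) \<le> cos th" using th T by (subst cos_mono_le_eq) auto
    then have "K * cos (dl e) \<le> K * cos th" using Kpos by simp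
    moreover have "sin th \<le> sin (dl e)" using th T by (intro sin_monotone_2pi_le) auto
    ultimately show ?thesis using T unfolding K_def by linarith
  qed
  ultimately have "b * cos ph \<ge> a * cos th + r * (K * cos th - sin th)"
    by (simp add: algebra_simps)
  moreover have "r * (K * cos th - sin th) \<ge> r * e" using r \<open>K * cos th - sin th \<ge> e\<close> by simp
  ultimately show ?thesis by (simp add: algebra_simps)
qed



lemma key_geo: assumes cat: "CAT0 TYPE('a::metric_space)" and e: "0 < e" "e \<le> 1/6"
  and px: "p \<noteq> (x::'a)" and yp: "y \<noteq> p" and g: "g \<in> dirs x" and gb: "gb \<in> dirs p"
  and hp: "dang p (dir x) gb \<ge> pi - dl e"
  and hy: "dang p gb (dir y) \<le> AA e"
  and hx: "dang x (dir p) g \<le> dl e"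
  shows "Plog x g y \<ge> Plog x g p + e * dist p y"
proof -
  note T = trig_facts[OF e]
  have xp: "x \<noteq> p" using px by auto
  have dxp: "dir x \<in> dirs p" using dir_in[OF cat xp] .
  have dyp: "dir y \<in> dirs p" using dir_in[OF cat yp] .
  have dpx: "dir p \<in> dirs x" using dir_in[OF cat px] .
  have "dang p (dir x) gb \<le> dang p (dir x) (dir y) + dang p (dir y) gb"
    by (rule dang_tri[OF cat dxp dyp gb])
  also have "dang p (dir y) gb = dang p gb (dir y)" by (rule dang_sym[OF cat dyp gb])
  finally have angP: "ang p x y \<ge> pi - dl e - AA e" using hp hy unfolding dang_dir by simp
  have yx: "y \<noteq> x"
  proof
    assume "y = x"
    then have "ang p x y = 0" using ang_self[OF cat xp] by simp
    then show False using angP T by simp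
  qed
  have cmpP: "cmp_angle p x y \<ge> pi - dl e - AA e" using angP ang_le_cmp[OF cat xp yp] by simp
  define th where "th = dang x g (dir p)"
  have th_eq: "th = dang x (dir p) g" unfolding th_def by (rule dang_sym[OF cat g dpx])
  have th: "0 \<le> th" "th \<le> dl e" using dang_nonneg[OF cat g dpx] hx th_eq unfolding th_def by auto
  define ph where "ph = dang x g (dir y)"
  have dyx: "dir y \<in> dirs x" using dir_in[OF cat yx] .
  have "ph \<le> dang x g (dir p) + dang x (dir p) (dir y)" unfolding ph_def by (rule dang_tri[OF cat g dpx dyx])
  also have "\<dots> \<le> th + cmp_angle x p y" unfolding th_def dang_dir using ang_le_cmp[OF cat px yx] by simp
  finally have ph: "0 \<le> ph" "ph \<le> th + cmp_angle x p y" using dang_nonneg[OF cat g dyx] unfolding ph_def by auto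
  have b1: "-1 \<le> cq (dist x p) (dist x y) (dist p y)" "cq (dist x p) (dist x y) (dist p y) \<le> 1"
    using cq_metric[OF px yx] by auto
  have b2: "-1 \<le> cq (dist x p) (dist p y) (dist x y)" "cq (dist x p) (dist p y) (dist x y) \<le> 1"
    using cq_metric[OF xp yp] by (auto simp: dist_commute)
  have cP: "cmp_angle p x y = arccos (cq (dist x p) (dist p y) (dist x y))"
    unfolding cmp_cq by (simp add: dist_commute)
  have "dist x y * cos ph \<ge> dist x p * cos th + e * dist p y"
    using keyreal[of "dist x p" "dist x y" "dist p y" e th ph] px yx yp e b1 b2 th ph cmpP cP
    unfolding cmp_cq by auto
  then show ?thesis unfolding Plog_def th_def ph_def using px yx by (simp add: dist_commute)
qed

lemma PiInt_eq: fixes f :: "'a \<Rightarrow> real"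
  assumes "S \<noteq> {}" "bdd_above (Plog x g ` S)" "bdd_below (Plog x g ` S)"
  shows "PiInt x g S = {Inf (Plog x g ` S) .. Sup (Plog x g ` S)}"
proof
  let ?V = "Plog x g ` S"
  have ne: "?V \<noteq> {}" using assms by simp
  have sub: "?V \<subseteq> {Inf ?V .. Sup ?V}"
  proof
    fix v assume "v \<in> ?V"
    then show "v \<in> {Inf ?V .. Sup ?V}" using assms(2,3) by (simp add: cInf_lower cSup_upper)
  qed
  show "PiInt x g S \<subseteq> {Inf ?V .. Sup ?V}" unfolding PiInt_def using sub by blast
  show "{Inf ?V .. Sup ?V} \<subseteq> PiInt x g S" unfolding PiInt_def
  proof (rule Inter_greatest)
    fix Y assume "Y \<in> {{a..b} | a b. ?V \<subseteq> {a..b}}"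
    then obtain a b where Y: "Y = {a..b}" and ab: "?V \<subseteq> {a..b}" by blast
    have "a \<le> Inf ?V" using ab ne by (intro cInf_greatest) auto
    moreover have "Sup ?V \<le> b" using ab ne by (intro cSup_least) auto
    ultimately show "{Inf ?V .. Sup ?V} \<subseteq> Y" unfolding Y by auto
  qed
qed

theorem mainTheorem15:
  fixes \<Omega> :: "'a::complete_space set" and m :: nat and \<xi> :: "real \<Rightarrow> 'a"
    and l \<tau> \<sigma> T \<epsilon> :: real and x :: 'a and gb g :: "nat \<Rightarrow> 'a"
  assumes "CAT0 TYPE('a)"
    and "bounded \<Omega>"
    and "TB \<Omega> m"
    and "\<epsilon> = 1 / (6 * real m)"
    and "self_contracted \<xi> l"
    and "\<xi> ` {0..<l} \<subseteq> \<Omega>"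
    and "\<tau> \<in> {0..<l}"
    and "gb \<in> dirs (\<xi> \<tau>)"
    and "\<forall>t\<in>{\<tau><..<l}. \<xi> t \<noteq> \<xi> \<tau> \<longrightarrow> dang (\<xi> \<tau>) gb (dir (\<xi> t)) \<le> arccos (3 * \<epsilon>)"
    and "\<sigma> > 0"
    and "T \<in> {\<tau><..<l}"
    and "x \<in> Omega_ts (\<xi> \<tau>) gb \<epsilon> \<sigma>"
    and "g \<in> dirs x"
    and "dang x (dir (\<xi> \<tau>)) g \<le> 2 * arcsin (\<epsilon> / 2)"
  shows "measure lebesgue (PiInt x g (Xi \<xi> l T))
           \<le> measure lebesgue (PiInt x g (Xi \<xi> l \<tau>)) - \<epsilon> / 2 * dist (\<xi> \<tau>) (\<xi> T)"
proof -
  note cat = assms(1)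
  define p where "p = \<xi> \<tau>"
  define f where "f = Plog x g"
  define D where "D = dist p (\<xi> T)"
  have pO: "p \<in> \<Omega>" using assms(6,7) unfolding p_def by auto
  have m0: "m \<noteq> 0"
  proof
    assume "m = 0"
    have "{gb} \<subseteq> dirs p" using assms(8) unfolding p_def by auto
    then have "finite {gb} \<and> card {gb} \<le> m" using assms(3) pO unfolding TB_def by blast
    then show False using \<open>m = 0\<close> by simp
  qed
  have rm: "real m \<ge> 1" using m0 by simp
  have e: "0 < \<epsilon>" "\<epsilon> \<le> 1/6"
  proof -
    show "0 < \<epsilon>" unfolding assms(4) using rm by simp
    have "1 / (6 * real m) \<le> 1 / 6" using rm by (intro divide_left_mono) auto
    then show "\<epsilon> \<le> 1/6" unfolding assms(4) .
  qed
  have xO: "0 < dist p x" "dang p (dir x) gb \<ge> pi - dl \<epsilon>"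
    using assms(12) unfolding Omega_ts_def dl_def p_def by auto
  have px: "p \<noteq> x" using xO by auto
  have hx: "dang x (dir p) g \<le> dl \<epsilon>" using assms(14) unfolding dl_def p_def .
  have sc: "\<And>t1 t2 t3. 0 \<le> t1 \<Longrightarrow> t1 \<le> t2 \<Longrightarrow> t2 \<le> t3 \<Longrightarrow> t3 < l \<Longrightarrow> dist (\<xi> t2) (\<xi> t3) \<le> dist (\<xi> t1) (\<xi> t3)"
    using assms(5) unfolding self_contracted_def by blast
  have core: "f (\<xi> t) \<ge> f p + \<epsilon> / 2 * D" if t: "t \<in> {T..<l}" for t
  proof -
    have tt: "\<tau> \<le> T" "T \<le> t" "t < l" "0 \<le> \<tau>" "\<tau> < t" using t assms(7,11) by auto
    have c1: "dist (\<xi> T) (\<xi> t) \<le> dist p (\<xi> t)" using sc[of \<tau> T t] tt unfolding p_def by simp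
    have Dle: "D \<le> 2 * dist p (\<xi> t)"
    proof -
      have "D \<le> dist p (\<xi> t) + dist (\<xi> T) (\<xi> t)" unfolding D_def by (rule dist_triangle2)
      then show ?thesis using c1 by simp
    qed
    show ?thesis
    proof (cases "\<xi> t = p")
      case True
      then have "D \<le> 0" using Dle by simp
      then have "\<epsilon> / 2 * D \<le> 0" using e by (simp add: mult_nonneg_nonpos)
      then show ?thesis using True by simp
    next
      case False
      have hy: "dang p gb (dir (\<xi> t)) \<le> AA \<epsilon>" using assms(9) tt False unfolding AA_def p_def by auto
      have "f (\<xi> t) \<ge> f p + \<epsilon> * dist p (\<xi> t)" unfolding f_def
        using key_geo[OF cat e px False assms(13) _ xO(2) hy hx] assms(8) unfolding p_def by simp
      moreover have "\<epsilon> / 2 * D \<le> \<epsilon> * dist p (\<xi> t)" using Dle e by (simp add: field_simps)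
      ultimately show ?thesis by simp
    qed
  qed
  obtain B where B: "\<forall>y\<in>\<Omega>. dist x y \<le> B" using assms(2) unfolding bounded_any_center[of _ x] by blast
  have fb: "\<bar>f y\<bar> \<le> B" if "y \<in> \<Omega>" for y
  proof -
    have "\<bar>f y\<bar> \<le> dist x y" unfolding f_def Plog_def
      by (auto simp: abs_mult intro: mult_left_le)
    then show ?thesis using B that by auto
  qed
  have XiO: "Xi \<xi> l s \<subseteq> \<Omega>" if "0 \<le> s" for s using assms(6) that unfolding Xi_def by auto
  have bdd: "bdd_above (f ` Xi \<xi> l s)" "bdd_below (f ` Xi \<xi> l s)" if "0 \<le> s" for s
  proof -
    show "bdd_above (f ` Xi \<xi> l s)" unfolding bdd_above_def
    proof (intro exI[of _ B] ballI)
      fix v assume "v \<in> f ` Xi \<xi> l s"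
      then obtain y where "y \<in> Xi \<xi> l s" "v = f y" by blast
      then show "v \<le> B" using fb[of y] XiO[OF that] by auto
    qed
    show "bdd_below (f ` Xi \<xi> l s)" unfolding bdd_below_def
    proof (intro exI[of _ "-B"] ballI)
      fix v assume "v \<in> f ` Xi \<xi> l s"
      then obtain y where "y \<in> Xi \<xi> l s" "v = f y" by blast
      then show "-B \<le> v" using fb[of y] XiO[OF that] by auto
    qed
  qed
  have T0: "0 \<le> T" "0 \<le> \<tau>" using assms(7,11) by auto
  have neT: "Xi \<xi> l T \<noteq> {}" using assms(11) unfolding Xi_def by auto
  have ne\<tau>: "Xi \<xi> l \<tau> \<noteq> {}" using assms(7) unfolding Xi_def by auto
  have subs: "Xi \<xi> l T \<subseteq> Xi \<xi> l \<tau>" using assms(11) unfolding Xi_def by auto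
  have pin: "p \<in> Xi \<xi> l \<tau>" using assms(7) unfolding Xi_def p_def by auto
  define A where "A = f ` Xi \<xi> l T"
  define Bs where "Bs = f ` Xi \<xi> l \<tau>"
  have A_ne: "A \<noteq> {}" unfolding A_def using neT by simp
  have PA: "PiInt x g (Xi \<xi> l T) = {Inf A .. Sup A}" unfolding A_def f_def
    using PiInt_eq[OF neT] bdd[OF T0(1)] unfolding f_def by simp
  have PB: "PiInt x g (Xi \<xi> l \<tau>) = {Inf Bs .. Sup Bs}" unfolding Bs_def f_def
    using PiInt_eq[OF ne\<tau>] bdd[OF T0(2)] unfolding f_def by simp
  have bA: "bdd_above A" "bdd_below A" using bdd[OF T0(1)] unfolding A_def by auto
  have bB: "bdd_above Bs" "bdd_below Bs" using bdd[OF T0(2)] unfolding Bs_def by auto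
  have AleA: "Inf A \<le> Sup A" using A_ne bA by (meson cInf_le_cSup)
  have BleB: "Inf Bs \<le> Sup Bs" using ne\<tau> bB unfolding Bs_def by (meson cInf_le_cSup image_is_empty)
  have s1: "Sup A \<le> Sup Bs" unfolding A_def Bs_def using neT subs bB unfolding Bs_def
    by (intro cSup_subset_mono) auto
  have s2: "Inf Bs \<le> f p" unfolding Bs_def using pin bB unfolding Bs_def by (intro cInf_lower) auto
  have s3: "f p + \<epsilon> / 2 * D \<le> Inf A" unfolding A_def using neT core
    by (intro cInf_greatest) (auto simp: Xi_def)
  show ?thesis unfolding PA PB using AleA BleB s1 s2 s3 unfolding D_def p_def by simp
qed

end
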